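(* Let $S\in U_q(\mathfrak h)^{\otimes2}$ be invertible, with $s:=\log_qS=\sum_{\mu,\nu}s_{\mu\nu}\zeta^{\alpha_\mu}\otimes\zeta^{\alpha_\nu}\in\mathfrak h\otimes\mathfrak h$. Put $m(s)=\sum s_{\mu\nu}\zeta^{\alpha_\mu}\zeta^{\alpha_\nu}$, and for each index $\mu$ let $$Y_\mu=-\zeta^{\alpha_\mu}+(\mathrm{id}\otimes\ell_\mu)(s)-(\ell_\mu\otimes\mathrm{id})(s)\in\mathfrak h,$$ where $\ell_\mu$ is the linear form $h\mapsto(\zeta^{\alpha_\mu},h)$. Define $$M^{(0)}(x)=q^{-\frac14m(\Omega_{\mathfrak h})-\frac12m(s)}\prod_\mu x_\mu^{\frac12Y_\mu}\in\mathbb A(\mathfrak h)\otimes U_q(\mathfrak h),$$ so that $M^{(0)}(x)^2=k^{-1}\,m(S^{-1})\prod_\mu x_\mu^{Y_\mu}$, where $k=q^{\frac12m(\Omega_{\mathfrak h})}$ and $m(S^{-1})=q^{-m(s)}$. Then $M^{(0)}(x)$ is invertible and satisfies $$\Delta(M^{(0)}(x))=S_{12}^{-1}\,M^{(0)}_1(xq^{h_2})\,M^{(0)}_2(x),\qquad M^{(0)}_1(xq^{h_2})^2=M^{(0)}_1(x)^2\,S_{12}\,S_{21}^{-1}\,K^{-1}.$$ If moreover $K\,S_{12}\,S_{21}=1\otimes1$, then $M^{(0)}(x)^2=\prod_\mu x_\mu^{Y_\mu}$.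
   Context: Setting. - $\mathfrak g$ is a simply-laced finite or non-twisted affine Kac–Moody algebra with Cartan subalgebra $\mathfrak h$, simple coroots $h_{\alpha_\mu}$, and invariant form $(\cdot,\cdot)$. - The index $\mu$ runs over the simple roots, and additionally over the symbol $d$ in the affine case, with $h_{\alpha_d}:=d$ and $\zeta^{\alpha_d}:=\zeta^d=c$. Thus $\{\zeta^{\alpha_\mu}\}$ is the basis of $\mathfrak h$ dual to $\{h_{\alpha_\mu}\}$ for $(\cdot,\cdot)$. - $\Omega_{\mathfrak h}=\sum_\mu\zeta^{\alpha_\mu}\otimes h_{\alpha_\mu}$, $K=q^{\Omega_{\mathfrak h}}$, and $m$ denotes multiplication $\mathfrak h\otimes\mathfrak h\to S(\mathfrak h)$. - $U_q(\mathfrak h)$ is the commutative algebra generated by the $q^{hh'}$ ($h,h'\in\mathfrak h\oplus\mathbb C$), with $\Delta(q^h)=q^h\otimes q^h$. Hence $\Delta(q^{hh'})=q^{hh'}\otimes q^{hh'}\,q^{h\otimes h'+h'\otimes h}$, with the tensor square extended by the elements $q^{h\otimes h'}$. - $\mathbb A(\mathfrak h)$ is the commutative Hopf algebra generated by symbols $x_\mu^h$ ($h\in\mathfrak h+\mathbb C1$) with $x_\mu^{h+h'}=x_\mu^hx_\mu^{h'}$ and $\Delta(x_\mu^h)=x_\mu^h\otimes x_\mu^h$; $\Delta$ acts on $\mathbb A(\mathfrak h)\otimes U_q(\mathfrak h)$ through the $U_q(\mathfrak h)$ factor. - The shifted argument $xq^{h_2}$ means: each factor $x_\mu^{Y}$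 with $Y$ in tensor factor 1 is replaced by $x_\mu^Y\,q^{Y\otimes h_{\alpha_\mu}}$, where $h_{\alpha_\mu}$ sits in tensor factor 2. *)

theory Defs
  imports Complex_Main
begin

text \<open>The index set of the mu (simple roots, plus d in the affine
case) is a finite type 'i.  Elements of the Cartan subalgebra h are coordinate
vectors w.r.t. the basis h_alpha_mu, i.e. functions 'i => complex.  The invariant
form is given by its (symmetric) Gram matrix G, G a b = (h_a, h_b).
The dual basis zeta^alpha_mu is given by zeta mu :: 'i => complex.

U_q(h) (and A(h) tensor U_q(h), and their tensor squares) are realised as
functions of weights lambda in h^* (lambda represented by its values
lambda mu = lambda(h_alpha_mu)), and of t, where x_mu = q^(t mu); q = exp hb.\<close>

type_synonym 'i cartan = "'i \<Rightarrow> complex"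

definition hvec :: "'i \<Rightarrow> 'i cartan" where
  "hvec \<mu> = (\<lambda>a. if a = \<mu> then 1 else 0)"

definition pair :: "'i::finite cartan \<Rightarrow> 'i cartan \<Rightarrow> complex" where
  "pair lam v = (\<Sum>a\<in>UNIV. v a * lam a)"

definition form :: "('i::finite \<Rightarrow> 'i \<Rightarrow> complex) \<Rightarrow> 'i cartan \<Rightarrow> 'i cartan \<Rightarrow> complex" where
  "form G u v = (\<Sum>a\<in>UNIV. \<Sum>b\<in>UNIV. u a * G a b * v b)"

definition is_dual_basis :: "('i::finite \<Rightarrow> 'i \<Rightarrow> complex) \<Rightarrow> ('i \<Rightarrow> 'i cartan) \<Rightarrow> bool" where
  "is_dual_basis G zeta \<longleftrightarrow> (\<forall>a b. G a b = G b a) \<and>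
     (\<forall>\<mu> \<nu>. form G (zeta \<mu>) (hvec \<nu>) = (if \<mu> = \<nu> then 1 else 0))"

definition qpow :: "complex \<Rightarrow> complex \<Rightarrow> complex" where
  "qpow hb z = exp (hb * z)"

text \<open>x_mu^Y for Y in h, as an element of A(h) tensor U_q(h)\<close>
definition xpow :: "complex \<Rightarrow> 'i::finite \<Rightarrow> 'i cartan \<Rightarrow> ('i \<Rightarrow> complex) \<Rightarrow> 'i cartan \<Rightarrow> complex" where
  "xpow hb \<mu> Y t lam = qpow hb (t \<mu> * pair lam Y)"

definition mOmega :: "('i::finite \<Rightarrow> 'i cartan) \<Rightarrow> 'i cartan \<Rightarrow> complex" where
  "mOmega zeta lam = (\<Sum>\<mu>\<in>UNIV. pair lam (zeta \<mu>) * pair lam (hvec \<mu>))"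

definition ms :: "('i::finite \<Rightarrow> 'i cartan) \<Rightarrow> ('i \<Rightarrow> 'i \<Rightarrow> complex) \<Rightarrow> 'i cartan \<Rightarrow> complex" where
  "ms zeta s lam = (\<Sum>a\<in>UNIV. \<Sum>b\<in>UNIV. s a b * pair lam (zeta a) * pair lam (zeta b))"

text \<open>S = q^s in U_q(h)^{tensor 2}, s = sum s_{ab} zeta^a tensor zeta^b; S21, K = q^Omega\<close>
definition Sfun :: "complex \<Rightarrow> ('i::finite \<Rightarrow> 'i cartan) \<Rightarrow> ('i \<Rightarrow> 'i \<Rightarrow> complex) \<Rightarrow> 'i cartan \<Rightarrow> 'i cartan \<Rightarrow> complex" where
  "Sfun hb zeta s lam1 lam2 =
     qpow hb (\<Sum>a\<in>UNIV. \<Sum>b\<in>UNIV. s a b * pair lam1 (zeta a) * pair lam2 (zeta b))"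

definition S21fun where
  "S21fun hb zeta s lam1 lam2 = Sfun hb zeta s lam2 lam1"

definition Kfun :: "complex \<Rightarrow> ('i::finite \<Rightarrow> 'i cartan) \<Rightarrow> 'i cartan \<Rightarrow> 'i cartan \<Rightarrow> complex" where
  "Kfun hb zeta lam1 lam2 = qpow hb (\<Sum>\<mu>\<in>UNIV. pair lam1 (zeta \<mu>) * pair lam2 (hvec \<mu>))"

definition Yvec :: "('i::finite \<Rightarrow> 'i \<Rightarrow> complex) \<Rightarrow> ('i \<Rightarrow> 'i cartan) \<Rightarrow> ('i \<Rightarrow> 'i \<Rightarrow> complex) \<Rightarrow> 'i \<Rightarrow> 'i cartan" where
  "Yvec G zeta s \<mu> = (\<lambda>c. - zeta \<mu> c
      + (\<Sum>a\<in>UNIV. \<Sum>b\<in>UNIV. s a b * zeta a c * form G (zeta \<mu>) (zeta b))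
      - (\<Sum>a\<in>UNIV. \<Sum>b\<in>UNIV. s a b * form G (zeta \<mu>) (zeta a) * zeta b c))"

definition M0 :: "complex \<Rightarrow> ('i::finite \<Rightarrow> 'i \<Rightarrow> complex) \<Rightarrow> ('i \<Rightarrow> 'i cartan) \<Rightarrow> ('i \<Rightarrow> 'i \<Rightarrow> complex)
                  \<Rightarrow> ('i \<Rightarrow> complex) \<Rightarrow> 'i cartan \<Rightarrow> complex" where
  "M0 hb G zeta s t lam =
     qpow hb (- (1/4) * mOmega zeta lam - (1/2) * ms zeta s lam) *
     (\<Prod>\<mu>\<in>UNIV. xpow hb \<mu> (\<lambda>c. (1/2) * Yvec G zeta s \<mu> c) t lam)"

definition kfun where "kfun hb zeta lam = qpow hb ((1/2) * mOmega zeta lam)"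
definition mSinv where "mSinv hb zeta s lam = qpow hb (- ms zeta s lam)"

text \<open>addition of weights (used for the coproduct: Delta F (lam1,lam2) = F (lam1+lam2))\<close>
definition addw :: "'i cartan \<Rightarrow> 'i cartan \<Rightarrow> 'i cartan" where
  "addw lam1 lam2 = (\<lambda>a. lam1 a + lam2 a)"

text \<open>the shifted argument x q^(h_2): t_mu \<mapsto> t_mu + lam2(h_alpha_mu)\<close>
definition shift :: "('i \<Rightarrow> complex) \<Rightarrow> 'i cartan \<Rightarrow> ('i \<Rightarrow> complex)" where
  "shift t lam2 = (\<lambda>\<mu>. t \<mu> + lam2 \<mu>)"

end

theory Submission imports Defs begin

lemma pair_add: "pair (addw l1 l2) v = pair l1 v + pair l2 v"
  by (simp add: pair_def addw_def distrib_left sum.distrib)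

lemma ifmul: "(if P then 1 else 0) * (x::complex) = (if P then x else 0)" by simp

lemma mulif: "(x::complex) * (if P then 1 else 0) = (if P then x else 0)" by simp

lemma pair_hvec: "pair l (hvec \<mu>) = l \<mu>"
  by (simp add: pair_def hvec_def ifmul)

lemma pair_scaleR: "pair l (\<lambda>c. k * v c) = k * pair l v"
  by (simp add: pair_def sum_distrib_left mult.assoc)

lemma pair_sum: "pair l (\<lambda>c. \<Sum>a\<in>UNIV. f a c) = (\<Sum>a\<in>UNIV. pair l (f a))"
  unfolding pair_def by (simp add: sum_distrib_right, rule sum.swap)

lemma swap3: "(\<Sum>\<mu>\<in>UNIV. (g::'a \<Rightarrow> complex) \<mu> * (\<Sum>a\<in>UNIV. \<Sum>b\<in>UNIV. F a b \<mu>))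
   = (\<Sum>a\<in>UNIV. \<Sum>b\<in>UNIV. \<Sum>\<mu>\<in>UNIV. g \<mu> * F a b \<mu>)"
  for F :: "'b::finite \<Rightarrow> 'c::finite \<Rightarrow> 'a::finite \<Rightarrow> complex"
proof -
  have "(\<Sum>\<mu>\<in>UNIV. g \<mu> * (\<Sum>a\<in>UNIV. \<Sum>b\<in>UNIV. F a b \<mu>))
     = (\<Sum>\<mu>\<in>UNIV. \<Sum>a\<in>UNIV. \<Sum>b\<in>UNIV. g \<mu> * F a b \<mu>)"
    by (simp only: sum_distrib_left)
  also have "\<dots> = (\<Sum>a\<in>UNIV. \<Sum>\<mu>\<in>UNIV. \<Sum>b\<in>UNIV. g \<mu> * F a b \<mu>)"
    by (rule sum.swap)
  also have "\<dots> = (\<Sum>a\<in>UNIV. \<Sum>b\<in>UNIV. \<Sum>\<mu>\<in>UNIV. g \<mu> * F a b \<mu>)"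
    by (rule sum.cong[OF refl], rule sum.swap)
  finally show ?thesis .
qed

lemma pair_half: "pair (\<lambda>a. l a / 2) v = pair l v / 2"
  by (simp add: pair_def sum_divide_distrib)

lemma form_lin2: "form G u v = (\<Sum>b\<in>UNIV. form G u (hvec b) * v b)"
proof -
  have h: "form G u (hvec b) = (\<Sum>a\<in>UNIV. u a * G a b)" for b
    unfolding form_def hvec_def by (simp add: mulif)
  show ?thesis unfolding h
    by (simp add: form_def sum_distrib_right mult.assoc, rule sum.swap)
qed

context fixes G :: "'i::finite \<Rightarrow> 'i \<Rightarrow> complex" and zeta assumes D: "is_dual_basis G zeta"
begin

lemma form_zeta: "form G (zeta \<mu>) v = v \<mu>"
proof -
  have "form G (zeta \<mu>) v = (\<Sum>b\<in>UNIV. (if \<mu> = b then 1 else 0) * v b)"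
    using D unfolding is_dual_basis_def by (subst form_lin2) simp
  also have "\<dots> = v \<mu>" by (simp add: ifmul)
  finally show ?thesis .
qed

lemma form_sym: "form G u v = form G v u"
proof -
  have "\<And>a b. G a b = G b a" using D unfolding is_dual_basis_def by blast
  then show ?thesis unfolding form_def by (subst sum.swap) (simp add: mult.commute mult.left_commute)
qed

lemma zeta_sym: "zeta \<mu> a = zeta a \<mu>"
  using form_zeta[of a "zeta \<mu>"] form_zeta[of \<mu> "zeta a"] form_sym[of "zeta a" "zeta \<mu>"] by simp

lemma pY: "pair l (Yvec G zeta s \<mu>) = - pair l (zeta \<mu>)
   + (\<Sum>a\<in>UNIV. \<Sum>b\<in>UNIV. s a b * pair l (zeta a) * zeta b \<mu>)
   - (\<Sum>a\<in>UNIV. \<Sum>b\<in>UNIV. s a b * zeta a \<mu> * pair l (zeta b))" (is "_ = ?rhs")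
proof -
  have e1: "(\<lambda>c. \<Sum>a\<in>UNIV. \<Sum>b\<in>UNIV. s a b * zeta a c * form G (zeta \<mu>) (zeta b))
     = (\<lambda>c. \<Sum>a\<in>UNIV. \<Sum>b\<in>UNIV. (s a b * zeta b \<mu>) * zeta a c)"
    by (simp add: form_zeta mult_ac)
  have e2: "(\<lambda>c. \<Sum>a\<in>UNIV. \<Sum>b\<in>UNIV. s a b * form G (zeta \<mu>) (zeta a) * zeta b c)
     = (\<lambda>c. \<Sum>a\<in>UNIV. \<Sum>b\<in>UNIV. (s a b * zeta a \<mu>) * zeta b c)"
    by (simp add: form_zeta mult_ac)
  have "pair l (Yvec G zeta s \<mu>) = - pair l (zeta \<mu>)
     + pair l (\<lambda>c. \<Sum>a\<in>UNIV. \<Sum>b\<in>UNIV. s a b * zeta a c * form G (zeta \<mu>) (zeta b))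
     - pair l (\<lambda>c. \<Sum>a\<in>UNIV. \<Sum>b\<in>UNIV. s a b * form G (zeta \<mu>) (zeta a) * zeta b c)"
    unfolding Yvec_def pair_def by (simp add: algebra_simps sum.distrib sum_subtractf sum_negf)
  also have "\<dots> = ?rhs"
    unfolding e1 e2 pair_sum pair_scaleR by (simp add: mult_ac)
  finally show ?thesis .
qed

lemma sumY: "(\<Sum>\<mu>\<in>UNIV. l2 \<mu> * pair l1 (Yvec G zeta s \<mu>)) =
   (\<Sum>a\<in>UNIV. \<Sum>b\<in>UNIV. s a b * pair l1 (zeta a) * pair l2 (zeta b))
 - (\<Sum>a\<in>UNIV. \<Sum>b\<in>UNIV. s a b * pair l2 (zeta a) * pair l1 (zeta b))
 - (\<Sum>\<mu>\<in>UNIV. pair l1 (zeta \<mu>) * l2 \<mu>)"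
proof -
  have A: "(\<Sum>\<mu>\<in>UNIV. l2 \<mu> * (\<Sum>a\<in>UNIV. \<Sum>b\<in>UNIV. s a b * pair l1 (zeta a) * zeta b \<mu>))
     = (\<Sum>a\<in>UNIV. \<Sum>b\<in>UNIV. s a b * pair l1 (zeta a) * pair l2 (zeta b))"
    unfolding swap3 by (intro sum.cong refl) (simp add: pair_def[of l2 "zeta b" for b] sum_distrib_left mult_ac)
  have B: "(\<Sum>\<mu>\<in>UNIV. l2 \<mu> * (\<Sum>a\<in>UNIV. \<Sum>b\<in>UNIV. s a b * zeta a \<mu> * pair l1 (zeta b)))
     = (\<Sum>a\<in>UNIV. \<Sum>b\<in>UNIV. s a b * pair l2 (zeta a) * pair l1 (zeta b))"
    unfolding swap3 by (intro sum.cong refl) (simp add: pair_def[of l2 "zeta a" for a] sum_distrib_left mult_ac)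
  have "(\<Sum>\<mu>\<in>UNIV. l2 \<mu> * pair l1 (Yvec G zeta s \<mu>)) =
     - (\<Sum>\<mu>\<in>UNIV. l2 \<mu> * pair l1 (zeta \<mu>))
     + (\<Sum>\<mu>\<in>UNIV. l2 \<mu> * (\<Sum>a\<in>UNIV. \<Sum>b\<in>UNIV. s a b * pair l1 (zeta a) * zeta b \<mu>))
     - (\<Sum>\<mu>\<in>UNIV. l2 \<mu> * (\<Sum>a\<in>UNIV. \<Sum>b\<in>UNIV. s a b * zeta a \<mu> * pair l1 (zeta b)))"
    unfolding pY by (simp add: algebra_simps sum.distrib sum_subtractf sum_negf del: sum_distrib_left sum_distrib_right)
  then show ?thesis unfolding A B by (simp add: mult.commute)
qed

lemma sym_cross: "(\<Sum>\<mu>\<in>UNIV. pair l1 (zeta \<mu>) * l2 \<mu>) = (\<Sum>\<mu>\<in>UNIV. pair l2 (zeta \<mu>) * l1 \<mu>)"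
proof -
  have "(\<Sum>\<mu>\<in>UNIV. pair l1 (zeta \<mu>) * l2 \<mu>) = (\<Sum>\<mu>\<in>UNIV. \<Sum>a\<in>UNIV. zeta a \<mu> * l1 a * l2 \<mu>)"
    by (simp add: pair_def sum_distrib_right zeta_sym)
  also have "\<dots> = (\<Sum>a\<in>UNIV. \<Sum>\<mu>\<in>UNIV. zeta a \<mu> * l1 a * l2 \<mu>)" by (rule sum.swap)
  also have "\<dots> = (\<Sum>\<mu>\<in>UNIV. pair l2 (zeta \<mu>) * l1 \<mu>)"
    by (intro sum.cong refl) (simp add: pair_def[of l2 "zeta a" for a] sum_distrib_left mult_ac)
  finally show ?thesis .
qed

end

definition Eex :: "('i::finite \<Rightarrow> 'i \<Rightarrow> complex) \<Rightarrow> ('i \<Rightarrow> 'i cartan) \<Rightarrow> ('i \<Rightarrow> 'i \<Rightarrow> complex)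
                  \<Rightarrow> ('i \<Rightarrow> complex) \<Rightarrow> 'i cartan \<Rightarrow> complex" where
  "Eex G zeta s t lam = -(1/4)*mOmega zeta lam - (1/2)*ms zeta s lam
     + (1/2) * (\<Sum>\<mu>\<in>UNIV. t \<mu> * pair lam (Yvec G zeta s \<mu>))"

lemma M0_exp: "M0 hb G zeta s t lam = exp (hb * Eex G zeta s t lam)"
proof -
  have h1: "(\<Prod>\<mu>\<in>UNIV. xpow hb \<mu> (\<lambda>c. (1/2) * Yvec G zeta s \<mu> c) t lam)
      = exp (\<Sum>\<mu>\<in>UNIV. hb * (t \<mu> * ((1/2) * pair lam (Yvec G zeta s \<mu>))))"
    unfolding xpow_def qpow_def pair_scaleR by (simp only: exp_sum[OF finite_UNIV])
  have h2: "(\<Sum>\<mu>\<in>UNIV. hb * (t \<mu> * ((1/2) * pair lam (Yvec G zeta s \<mu>))))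
      = hb * ((1/2) * (\<Sum>\<mu>\<in>UNIV. t \<mu> * pair lam (Yvec G zeta s \<mu>)))"
    by (simp add: sum_distrib_left mult_ac)
  show ?thesis
    unfolding M0_def h1 h2 qpow_def Eex_def
    by (simp only: exp_add[symmetric]) (rule arg_cong[where f=exp], simp add: algebra_simps)
qed

lemma prodY: "(\<Prod>\<mu>\<in>UNIV. xpow hb \<mu> (Yvec G zeta s \<mu>) t lam)
   = exp (hb * (\<Sum>\<mu>\<in>UNIV. t \<mu> * pair lam (Yvec G zeta s \<mu>)))"
  by (simp add: exp_sum xpow_def qpow_def sum_distrib_left)

lemma mO_add: "mOmega zeta (addw l1 l2) = mOmega zeta l1 + mOmega zeta l2
   + (\<Sum>\<mu>\<in>UNIV. pair l1 (zeta \<mu>) * l2 \<mu>) + (\<Sum>\<mu>\<in>UNIV. pair l2 (zeta \<mu>) * l1 \<mu>)"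
  unfolding mOmega_def pair_add pair_hvec by (simp add: addw_def algebra_simps sum.distrib)

lemma ms_add: "ms zeta s (addw l1 l2) = ms zeta s l1 + ms zeta s l2
   + (\<Sum>a\<in>UNIV. \<Sum>b\<in>UNIV. s a b * pair l1 (zeta a) * pair l2 (zeta b))
   + (\<Sum>a\<in>UNIV. \<Sum>b\<in>UNIV. s a b * pair l2 (zeta a) * pair l1 (zeta b))"
  unfolding ms_def pair_add by (simp add: algebra_simps sum.distrib)

lemma sq_exp: "(exp (x::complex))\<^sup>2 = exp (2 * x)"
  by (simp add: power2_eq_square exp_add[symmetric])

theorem mainTheorem3:
  fixes hb :: complex and G :: "'i::finite \<Rightarrow> 'i \<Rightarrow> complex"
    and zeta :: "'i \<Rightarrow> 'i cartan" and s :: "'i \<Rightarrow> 'i \<Rightarrow> complex"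
  assumes "is_dual_basis G zeta"
  shows "(\<exists>N. \<forall>t lam. M0 hb G zeta s t lam * N t lam = 1)
    \<and> (\<forall>t lam. (M0 hb G zeta s t lam)\<^sup>2 =
          inverse (kfun hb zeta lam) * mSinv hb zeta s lam *
          (\<Prod>\<mu>\<in>UNIV. xpow hb \<mu> (Yvec G zeta s \<mu>) t lam))
    \<and> (\<forall>t lam1 lam2. M0 hb G zeta s t (addw lam1 lam2) =
          inverse (Sfun hb zeta s lam1 lam2) * M0 hb G zeta s (shift t lam2) lam1 * M0 hb G zeta s t lam2)
    \<and> (\<forall>t lam1 lam2. (M0 hb G zeta s (shift t lam2) lam1)\<^sup>2 =
          (M0 hb G zeta s t lam1)\<^sup>2 * Sfun hb zeta s lam1 lam2 * inverse (S21fun hb zeta s lam1 lam2)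
            * inverse (Kfun hb zeta lam1 lam2))
    \<and> ((\<forall>lam1 lam2. Kfun hb zeta lam1 lam2 * Sfun hb zeta s lam1 lam2 * S21fun hb zeta s lam1 lam2 = 1)
        \<longrightarrow> (\<forall>t lam. (M0 hb G zeta s t lam)\<^sup>2 = (\<Prod>\<mu>\<in>UNIV. xpow hb \<mu> (Yvec G zeta s \<mu>) t lam)))"
proof -
  note D = assms
  define SS where "SS l1 l2 = (\<Sum>a\<in>UNIV. \<Sum>b\<in>UNIV. s a b * pair l1 (zeta a) * pair l2 (zeta b))"
    for l1 l2 :: "'i cartan"
  define CC where "CC l1 l2 = (\<Sum>\<mu>\<in>UNIV. pair l1 (zeta \<mu>) * l2 \<mu>)" for l1 l2 :: "'i cartan"
  define LL where "LL t l = (\<Sum>\<mu>\<in>UNIV. t \<mu> * pair l (Yvec G zeta s \<mu>))" for t and l :: "'i cartan"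
  have Sf: "Sfun hb zeta s l1 l2 = exp (hb * SS l1 l2)" for l1 l2
    by (simp add: Sfun_def qpow_def SS_def)
  have Kf: "Kfun hb zeta l1 l2 = exp (hb * CC l1 l2)" for l1 l2
    by (simp add: Kfun_def qpow_def CC_def pair_hvec)
  have E: "Eex G zeta s t l = -(1/4)*mOmega zeta l - (1/2)*ms zeta s l + (1/2) * LL t l" for t l
    by (simp add: Eex_def LL_def)
  have sY: "LL l2 l1 = SS l1 l2 - SS l2 l1 - CC l1 l2" for l1 l2
    using sumY[OF D, of l2 l1 s] by (simp add: LL_def SS_def CC_def)
  have sc: "CC l1 l2 = CC l2 l1" for l1 l2
    using sym_cross[OF D] by (simp add: CC_def)
  have mO: "mOmega zeta (addw l1 l2) = mOmega zeta l1 + mOmega zeta l2 + CC l1 l2 + CC l2 l1" for l1 l2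
    using mO_add by (simp add: CC_def)
  have mS: "ms zeta s (addw l1 l2) = ms zeta s l1 + ms zeta s l2 + SS l1 l2 + SS l2 l1" for l1 l2
    using ms_add by (simp add: SS_def)
  have Ladd: "LL t (addw l1 l2) = LL t l1 + LL t l2" for t l1 l2
    by (simp add: LL_def pair_add algebra_simps sum.distrib)
  have Lsh: "LL (shift t l2) l1 = LL t l1 + LL l2 l1" for t l1 l2
    by (simp add: LL_def shift_def algebra_simps sum.distrib)
  have P2: "(M0 hb G zeta s t lam)\<^sup>2 =
          inverse (kfun hb zeta lam) * mSinv hb zeta s lam *
          (\<Prod>\<mu>\<in>UNIV. xpow hb \<mu> (Yvec G zeta s \<mu>) t lam)" for t lam
  proof -
    have "(M0 hb G zeta s t lam)\<^sup>2 = exp (hb * (-(1/2) * mOmega zeta lam) + hb * (- ms zeta s lam) + hb * LL t lam)"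
      unfolding M0_exp sq_exp E by (rule arg_cong[where f=exp]) (simp add: algebra_simps)
    then show ?thesis
      unfolding prodY kfun_def mSinv_def qpow_def exp_add LL_def
      by (simp add: exp_minus[symmetric])
  qed
  show ?thesis
  proof (intro conjI allI impI)
    show "\<exists>N. \<forall>t lam. M0 hb G zeta s t lam * N t lam = 1"
      by (rule exI[of _ "\<lambda>t lam. inverse (M0 hb G zeta s t lam)"]) (simp add: M0_exp)
  next
    fix t lam show "(M0 hb G zeta s t lam)\<^sup>2 =
          inverse (kfun hb zeta lam) * mSinv hb zeta s lam *
          (\<Prod>\<mu>\<in>UNIV. xpow hb \<mu> (Yvec G zeta s \<mu>) t lam)" by (rule P2)
  next
    fix t lam1 lam2
    have "Eex G zeta s t (addw lam1 lam2) = - SS lam1 lam2 + Eex G zeta s (shift t lam2) lam1 + Eex G zeta s t lam2"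
      unfolding E mO mS Ladd Lsh using sc[of lam1 lam2] sY[of lam2 lam1] by (simp add: algebra_simps)
    then show "M0 hb G zeta s t (addw lam1 lam2) =
          inverse (Sfun hb zeta s lam1 lam2) * M0 hb G zeta s (shift t lam2) lam1 * M0 hb G zeta s t lam2"
      unfolding M0_exp Sf by (simp add: exp_minus[symmetric] exp_add[symmetric] distrib_left right_diff_distrib)
  next
    fix t lam1 lam2
    have "2 * (hb * Eex G zeta s (shift t lam2) lam1) = 2 * (hb * Eex G zeta s t lam1) + hb * SS lam1 lam2
        + (- (hb * SS lam2 lam1)) + (- (hb * CC lam1 lam2))"
      unfolding E Lsh using sY[of lam2 lam1] by (simp add: algebra_simps) (metis distrib_left)
    then show "(M0 hb G zeta s (shift t lam2) lam1)\<^sup>2 =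
          (M0 hb G zeta s t lam1)\<^sup>2 * Sfun hb zeta s lam1 lam2 * inverse (S21fun hb zeta s lam1 lam2)
            * inverse (Kfun hb zeta lam1 lam2)"
      unfolding M0_exp sq_exp S21fun_def Sf Kf by (simp add: exp_minus[symmetric] exp_add[symmetric])
  next
    fix t and lam :: "'i cartan"
    assume H: "\<forall>lam1 lam2. Kfun hb zeta lam1 lam2 * Sfun hb zeta s lam1 lam2 * S21fun hb zeta s lam1 lam2 = 1"
    define h where "h = (\<lambda>a. lam a / 2)"
    have "Kfun hb zeta h h * Sfun hb zeta s h h * S21fun hb zeta s h h = 1" using H by blast
    then have "exp (hb * (CC h h + SS h h + SS h h)) = 1"
      unfolding S21fun_def Sf Kf by (simp add: exp_add[symmetric] distrib_left mult_ac)
    moreover have "CC h h = mOmega zeta lam / 4"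
      by (simp add: CC_def h_def pair_half mOmega_def pair_hvec sum_divide_distrib)
    moreover have "SS h h = ms zeta s lam / 4"
      by (simp add: SS_def h_def pair_half ms_def sum_divide_distrib)
    ultimately have e1: "exp (hb * (mOmega zeta lam / 4 + ms zeta s lam / 2)) = 1"
      by (simp add: field_simps)
    have "inverse (kfun hb zeta lam) * mSinv hb zeta s lam
        = inverse ((exp (hb * (mOmega zeta lam / 4 + ms zeta s lam / 2)))\<^sup>2)"
      unfolding sq_exp kfun_def mSinv_def qpow_def
      by (simp add: exp_minus[symmetric] exp_add[symmetric] algebra_simps)
    then show "(M0 hb G zeta s t lam)\<^sup>2 = (\<Prod>\<mu>\<in>UNIV. xpow hb \<mu> (Yvec G zeta s \<mu>) t lam)"
      unfolding P2 e1 by simp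
  qed
qed

end
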